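(* Fix integers $m\ge 1$ and $n\ge 0$. There is a function $P_{n,m}:\mathbb{Z}_{\ge 0}\to\mathbb{Q}$ (in fact a polynomial) depending only on $n$ and $m$ with the following property. For every set $a=\{a_1,\dots,a_m\}$ of $m$ multiplicatively independent integers $a_i\ge 2$, there is $N=N(n,a)$ such that for every $s\ge 1$ and all positive integers $k_1,\dots,k_s$ for which $k_1+1,\dots,k_s+1$ are primes larger than $N$, the number of $n$-element independent sets of the disjoint union $G(a,k_1)+G(a,k_2)+\cdots+G(a,k_s)$ equals $P_{n,m}(k_1+\cdots+k_s)$. In other words, this number depends only on $n$, $m$ and $\sum_i k_i$.
   Context: A set $\{a_1,\dots,a_m\}$ of positive integers is multiplicatively independent if $a_1^{i_1}\cdots a_m^{i_m}=1$ with integers $i_1,\dots,i_m$ implies $i_1=\dots=i_m=0$. For such $a$ and a positive integer $k$, $G(a,k)$ is the simple graph with vertex set $\{1,2,\dots,k\}$ in which distinct vertices $i,j$ are adjacent if and only if $i\equiv a_rj\pmod{k+1}$ or $j\equiv a_ri\pmod{k+1}$ for some $1\le r\le m$. $G_1+G_2+\cdots+G_s$ denotes the disjoint union of graphs. An independent set is a set of vertices no two of which are adjacent. *)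

theory Defs
  imports "HOL-Number_Theory.Number_Theory" "HOL-Computational_Algebra.Polynomial"
begin

definition mult_indep :: "nat set \<Rightarrow> bool" where
  "mult_indep A \<longleftrightarrow>
     (\<forall>e :: nat \<Rightarrow> int. (\<Prod>x\<in>A. (of_nat x :: rat) powi e x) = 1 \<longrightarrow> (\<forall>x\<in>A. e x = 0))"

definition G_adj :: "nat set \<Rightarrow> nat \<Rightarrow> nat \<Rightarrow> nat \<Rightarrow> bool" where
  "G_adj A k i j \<longleftrightarrow> i \<noteq> j \<and> i \<in> {1..k} \<and> j \<in> {1..k} \<and>
     (\<exists>r\<in>A. [i = r * j] (mod (k + 1)) \<or> [j = r * i] (mod (k + 1)))"

definition union_verts :: "(nat \<Rightarrow> nat) \<Rightarrow> nat \<Rightarrow> (nat \<times> nat) set" where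
  "union_verts k s = {(t, i). t < s \<and> i \<in> {1..k t}}"

definition union_adj :: "nat set \<Rightarrow> (nat \<Rightarrow> nat) \<Rightarrow> nat \<times> nat \<Rightarrow> nat \<times> nat \<Rightarrow> bool" where
  "union_adj A k v w \<longleftrightarrow> fst v = fst w \<and> G_adj A (k (fst v)) (snd v) (snd w)"

definition num_indep_sets :: "nat set \<Rightarrow> (nat \<Rightarrow> nat) \<Rightarrow> nat \<Rightarrow> nat \<Rightarrow> nat" where
  "num_indep_sets A k s n = card {S. S \<subseteq> union_verts k s \<and> card S = n \<and>
      (\<forall>v\<in>S. \<forall>w\<in>S. \<not> union_adj A k v w)}"

end

theory Submission
  imports Defs "HOL-Combinatorics.Multiset_Permutations"
begin



definition Pp :: "(nat \<Rightarrow> nat) \<Rightarrow> nat \<Rightarrow> (nat \<Rightarrow> int) \<Rightarrow> nat" where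
  "Pp a m v = (\<Prod>r<m. a r ^ nat (v r))"
definition Pm :: "(nat \<Rightarrow> nat) \<Rightarrow> nat \<Rightarrow> (nat \<Rightarrow> int) \<Rightarrow> nat" where
  "Pm a m v = (\<Prod>r<m. a r ^ nat (- v r))"

definition Act :: "(nat \<Rightarrow> nat) \<Rightarrow> nat \<Rightarrow> (nat \<Rightarrow> nat) \<Rightarrow> nat \<times> nat \<Rightarrow> (nat \<Rightarrow> int) \<Rightarrow> nat \<times> nat \<Rightarrow> bool" where
  "Act a m k x v y \<longleftrightarrow> fst y = fst x \<and> [snd y * Pm a m v = snd x * Pp a m v] (mod (k (fst x) + 1))"

definition bnd :: "nat \<Rightarrow> nat \<Rightarrow> (nat \<Rightarrow> int) \<Rightarrow> bool" where
  "bnd m M v \<longleftrightarrow> (\<forall>r<m. \<bar>v r\<bar> \<le> int M)"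

definition inB :: "nat \<Rightarrow> (nat \<Rightarrow> int) \<Rightarrow> bool" where
  "inB m b \<longleftrightarrow> (\<forall>r<m. b r = 0) \<or> (\<exists>r0<m. \<forall>r<m. b r = (if r = r0 then 1 else 0))
     \<or> (\<exists>r0<m. \<forall>r<m. b r = (if r = r0 then -1 else 0))"

lemma Pp_Pm_add:
  "Pp a m v * Pp a m u * Pm a m (\<lambda>r. v r + u r) = Pp a m (\<lambda>r. v r + u r) * Pm a m v * Pm a m u"
proof -
  have "\<And>r. a r ^ nat (v r) * a r ^ nat (u r) * a r ^ nat (- (v r + u r)) =
     a r ^ nat (v r + u r) * a r ^ nat (- v r) * a r ^ nat (- u r)"
  proof -
    fix r
    have "nat (v r) + nat (u r) + nat (- (v r + u r)) = nat (v r + u r) + nat (- v r) + nat (- u r)"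
      by arith
    thus "?thesis r" by (metis power_add)
  qed
  thus ?thesis unfolding Pp_def Pm_def by (simp add: prod.distrib[symmetric])
qed

lemma Pp_neg: "Pp a m (\<lambda>r. - v r) = Pm a m v" and Pm_neg: "Pm a m (\<lambda>r. - v r) = Pp a m v"
  by (simp_all add: Pp_def Pm_def)

lemma Pp_cong: "(\<And>r. r < m \<Longrightarrow> v r = u r) \<Longrightarrow> Pp a m v = Pp a m u"
  and Pm_cong: "(\<And>r. r < m \<Longrightarrow> v r = u r) \<Longrightarrow> Pm a m v = Pm a m u"
  by (auto simp: Pp_def Pm_def intro!: prod.cong)

lemma Pp_zero: "(\<And>r. r < m \<Longrightarrow> v r = 0) \<Longrightarrow> Pp a m v = 1"
  and Pm_zero: "(\<And>r. r < m \<Longrightarrow> v r = 0) \<Longrightarrow> Pm a m v = 1"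
  by (auto simp: Pp_def Pm_def intro!: prod.neutral)

locale gsetup =
  fixes A :: "nat set" and a :: "nat \<Rightarrow> nat" and m :: nat and k :: "nat \<Rightarrow> nat" and s :: nat and M :: nat
  assumes A_def: "A = a ` {0..<m}"
  and kprime: "\<And>t. t < s \<Longrightarrow> prime (k t + 1)"
  and ndvd: "\<And>t r. t < s \<Longrightarrow> r < m \<Longrightarrow> \<not> (k t + 1) dvd a r"
  and locinj: "\<And>t v u. t < s \<Longrightarrow> bnd m M v \<Longrightarrow> bnd m M u \<Longrightarrow>
      [Pp a m v * Pm a m u = Pp a m u * Pm a m v] (mod (k t + 1)) \<Longrightarrow> \<forall>r<m. v r = u r"
begin

abbreviation "V \<equiv> union_verts k s"

lemma V_iff: "x \<in> V \<longleftrightarrow> fst x < s \<and> 1 \<le> snd x \<and> snd x \<le> k (fst x)"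
  by (cases x) (auto simp: union_verts_def)

lemma ndvd_Pp: "t < s \<Longrightarrow> \<not> (k t + 1) dvd Pp a m v"
  and ndvd_Pm: "t < s \<Longrightarrow> \<not> (k t + 1) dvd Pm a m v"
proof -
  assume t: "t < s"
  have p: "prime (k t + 1)" using kprime[OF t] .
  have "\<And>r e. r < m \<Longrightarrow> \<not> (k t + 1) dvd a r ^ e"
    using prime_dvd_power[OF p] ndvd[OF t] by blast
  thus "\<not> (k t + 1) dvd Pp a m v" using p by (simp add: Pp_def prime_dvd_prod_iff del: add_Suc_right)
next
  assume t: "t < s"
  have p: "prime (k t + 1)" using kprime[OF t] .
  have "\<And>r e. r < m \<Longrightarrow> \<not> (k t + 1) dvd a r ^ e"
    using prime_dvd_power[OF p] ndvd[OF t] by blast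
  thus "\<not> (k t + 1) dvd Pm a m v" using p by (simp add: Pm_def prime_dvd_prod_iff del: add_Suc_right)
qed

lemma ndvd_V: "x \<in> V \<Longrightarrow> \<not> (k (fst x) + 1) dvd snd x"
  by (auto simp: V_iff dest: dvd_imp_le)

lemma cop: "t < s \<Longrightarrow> \<not> (k t + 1) dvd c \<Longrightarrow> coprime c (k t + 1)"
  using kprime prime_imp_coprime by (metis coprime_commute)

lemma act_exists: assumes "x \<in> V" shows "\<exists>y\<in>V. Act a m k x v y"
proof -
  let ?p = "k (fst x) + 1"
  have t: "fst x < s" using assms V_iff by auto
  obtain c where c: "[Pm a m v * c = 1] (mod ?p)"
    using cong_solve_coprime_nat[OF cop[OF t ndvd_Pm[OF t]]] by auto
  define z where "z = (snd x * Pp a m v * c) mod ?p"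
  have p1: "?p > 1" using kprime[OF t] prime_gt_1_nat by blast
  have "\<not> ?p dvd c"
  proof
    assume "?p dvd c"
    hence "(Pm a m v * c) mod ?p = 0" by simp
    moreover have "(Pm a m v * c) mod ?p = 1" using c p1 unfolding cong_def by simp
    ultimately show False by simp
  qed
  hence nz: "\<not> ?p dvd snd x * Pp a m v * c"
    using kprime[OF t] ndvd_Pp[OF t] ndvd_V[OF assms] by (simp add: prime_dvd_mult_iff)
  have "z \<noteq> 0" using nz unfolding z_def by (simp add: dvd_eq_mod_eq_0)
  moreover have "z < ?p" unfolding z_def by simp
  ultimately have zV: "(fst x, z) \<in> V" using t by (auto simp: V_iff)
  have "[z * Pm a m v = snd x * Pp a m v * c * Pm a m v] (mod ?p)"
    unfolding z_def by (simp add: cong_def mod_mult_left_eq)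
  also have "[snd x * Pp a m v * c * Pm a m v = snd x * Pp a m v * 1] (mod ?p)"
    using cong_scalar_left[OF c, of "snd x * Pp a m v"] by (simp add: ac_simps)
  finally show ?thesis using zV by (auto simp: Act_def intro!: bexI[of _ "(fst x, z)"])
qed

lemma act_unique: assumes "x \<in> V" "y \<in> V" "y' \<in> V" "Act a m k x v y" "Act a m k x v y'"
  shows "y = y'"
proof -
  have t: "fst x < s" using assms V_iff by auto
  have "[snd y * Pm a m v = snd y' * Pm a m v] (mod (k (fst x) + 1))"
    using assms(4,5) unfolding Act_def by (metis cong_sym cong_trans)
  hence "[snd y = snd y'] (mod (k (fst x) + 1))"
    using cong_mult_rcancel_nat[OF cop[OF t ndvd_Pm[OF t]]] by blast
  moreover have "snd y < k (fst x) + 1" "snd y' < k (fst x) + 1"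
    using assms(2,3,4,5) by (auto simp: V_iff Act_def)
  ultimately have "snd y = snd y'" by (rule cong_less_modulus_unique_nat)
  thus ?thesis using assms(4,5) by (simp add: Act_def prod_eq_iff)
qed

lemma act_comp: assumes "x \<in> V" "Act a m k x v y" "Act a m k y u z"
  shows "Act a m k x (\<lambda>r. v r + u r) z"
proof -
  have t: "fst x < s" using assms V_iff by auto
  let ?p = "k (fst x) + 1" and ?w = "\<lambda>r. v r + u r"
  have fy: "fst y = fst x" using assms by (simp add: Act_def)
  have h1: "[snd y * Pm a m v = snd x * Pp a m v] (mod ?p)" using assms by (simp add: Act_def)
  have h2: "[snd z * Pm a m u = snd y * Pp a m u] (mod ?p)" using assms fy by (simp add: Act_def)
  have "[snd z * Pm a m ?w * (Pm a m v * Pm a m u) = (snd z * Pm a m u) * (Pm a m v * Pm a m ?w)] (mod ?p)"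
    by (simp add: ac_simps)
  also have "[(snd z * Pm a m u) * (Pm a m v * Pm a m ?w) = (snd y * Pp a m u) * (Pm a m v * Pm a m ?w)] (mod ?p)"
    using h2 by (rule cong_mult) simp
  also have "(snd y * Pp a m u) * (Pm a m v * Pm a m ?w) = (snd y * Pm a m v) * (Pp a m u * Pm a m ?w)"
    by (simp add: ac_simps)
  also have "[(snd y * Pm a m v) * (Pp a m u * Pm a m ?w) = (snd x * Pp a m v) * (Pp a m u * Pm a m ?w)] (mod ?p)"
    using h1 by (rule cong_mult) simp
  also have "(snd x * Pp a m v) * (Pp a m u * Pm a m ?w) = snd x * (Pp a m v * Pp a m u * Pm a m ?w)"
    by (simp add: ac_simps)
  also have "\<dots> = snd x * Pp a m ?w * (Pm a m v * Pm a m u)"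
    by (metis Pp_Pm_add mult.assoc)
  finally have "[snd z * Pm a m ?w = snd x * Pp a m ?w] (mod ?p)"
    using cong_mult_rcancel_nat[OF cop[OF t]] ndvd_Pm[OF t] kprime[OF t]
    by (simp add: prime_dvd_mult_iff)
  thus ?thesis using assms fy by (simp add: Act_def)
qed

lemma act_inv: assumes "Act a m k x v y" shows "Act a m k y (\<lambda>r. - v r) x"
proof -
  have "fst y = fst x" "[snd y * Pm a m v = snd x * Pp a m v] (mod (k (fst x) + 1))"
    using assms by (auto simp: Act_def)
  thus ?thesis unfolding Act_def Pp_neg Pm_neg by (metis cong_sym)
qed

lemma act_zero: "x \<in> V \<Longrightarrow> (\<And>r. r < m \<Longrightarrow> v r = 0) \<Longrightarrow> Act a m k x v x"
  by (simp add: Act_def Pp_zero Pm_zero)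

lemma act_zero_eq: "x \<in> V \<Longrightarrow> y \<in> V \<Longrightarrow> (\<And>r. r < m \<Longrightarrow> v r = 0) \<Longrightarrow> Act a m k x v y \<Longrightarrow> y = x"
  using act_unique act_zero by blast

lemma act_locinj: assumes "x \<in> V" "Act a m k x v y" "Act a m k x u y" "bnd m M v" "bnd m M u"
  shows "\<forall>r<m. v r = u r"
proof -
  have t: "fst x < s" using assms V_iff by auto
  let ?p = "k (fst x) + 1"
  have h1: "[snd y * Pm a m v = snd x * Pp a m v] (mod ?p)"
   and h2: "[snd y * Pm a m u = snd x * Pp a m u] (mod ?p)" using assms by (auto simp: Act_def)
  have "[snd x * (Pp a m v * Pm a m u) = (snd x * Pp a m v) * Pm a m u] (mod ?p)" by (simp add: ac_simps)
  also have "[(snd x * Pp a m v) * Pm a m u = (snd y * Pm a m v) * Pm a m u] (mod ?p)"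
    by (rule cong_mult[OF cong_sym[OF h1] cong_refl])
  also have "(snd y * Pm a m v) * Pm a m u = (snd y * Pm a m u) * Pm a m v" by (simp add: ac_simps)
  also have "[(snd y * Pm a m u) * Pm a m v = (snd x * Pp a m u) * Pm a m v] (mod ?p)"
    by (rule cong_mult[OF h2 cong_refl])
  also have "(snd x * Pp a m u) * Pm a m v = snd x * (Pp a m u * Pm a m v)" by (simp add: ac_simps)
  finally have "[Pp a m v * Pm a m u = Pp a m u * Pm a m v] (mod ?p)"
    using cong_mult_lcancel_nat[OF cop[OF t ndvd_V[OF assms(1)]]] by blast
  thus ?thesis using locinj[OF t assms(4,5)] by blast
qed

end



definition ev :: "nat \<Rightarrow> int \<Rightarrow> nat \<Rightarrow> int" where "ev r0 c = (\<lambda>r. if r = r0 then c else 0)"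

lemma Pp_ev1: "r0 < m \<Longrightarrow> Pp a m (ev r0 1) = a r0"
  and Pm_ev1: "r0 < m \<Longrightarrow> Pm a m (ev r0 1) = 1"
  and Pp_evm1: "r0 < m \<Longrightarrow> Pp a m (ev r0 (-1)) = 1"
  and Pm_evm1: "r0 < m \<Longrightarrow> Pm a m (ev r0 (-1)) = a r0"
  by (auto simp: Pp_def Pm_def ev_def if_distrib prod.If_cases Int_absorb1 cong: if_cong)

context gsetup begin

lemma inB_cases: assumes "inB m b"
  obtains "\<forall>r<m. b r = 0" | r0 where "r0 < m" "\<forall>r<m. b r = ev r0 1 r"
  | r0 where "r0 < m" "\<forall>r<m. b r = ev r0 (-1) r"
  using assms unfolding inB_def ev_def by blast

lemma R_iff: assumes "u \<in> V" "w \<in> V" and M1: "M \<ge> 1"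
  shows "(u = w \<or> union_adj A k u w) \<longleftrightarrow> (\<exists>b. inB m b \<and> Act a m k u b w)"
proof
  assume "u = w \<or> union_adj A k u w"
  thus "\<exists>b. inB m b \<and> Act a m k u b w"
  proof
    assume "u = w" thus ?thesis using act_zero[OF assms(1), of "\<lambda>r. 0"]
      by (intro exI[of _ "\<lambda>r. 0"]) (auto simp: inB_def)
  next
    assume ua: "union_adj A k u w"
    let ?p = "k (fst u) + 1"
    from ua have f: "fst u = fst w" and "\<exists>r\<in>A. [snd u = r * snd w] (mod ?p) \<or> [snd w = r * snd u] (mod ?p)"
      by (auto simp: union_adj_def G_adj_def)
    then obtain r0 where r0: "r0 < m" and
      c: "[snd u = a r0 * snd w] (mod ?p) \<or> [snd w = a r0 * snd u] (mod ?p)" using A_def by auto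
    from c show ?thesis
    proof
      assume h: "[snd u = a r0 * snd w] (mod ?p)"
      have "Act a m k u (ev r0 (-1)) w" unfolding Act_def Pp_evm1[OF r0] Pm_evm1[OF r0]
        using f h by (simp add: cong_sym mult.commute)
      moreover have "inB m (ev r0 (-1))" using r0 unfolding inB_def ev_def by auto
      ultimately show ?thesis by blast
    next
      assume h: "[snd w = a r0 * snd u] (mod ?p)"
      have "Act a m k u (ev r0 1) w" unfolding Act_def Pp_ev1[OF r0] Pm_ev1[OF r0]
        using f h by (simp add: mult.commute)
      moreover have "inB m (ev r0 1)" using r0 unfolding inB_def ev_def by auto
      ultimately show ?thesis by blast
    qed
  qed
next
  assume "\<exists>b. inB m b \<and> Act a m k u b w"
  then obtain b where b: "inB m b" and act: "Act a m k u b w" by blast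
  let ?p = "k (fst u) + 1"
  have f: "fst w = fst u" using act by (simp add: Act_def)
  have bnd0: "bnd m M (\<lambda>r. 0)" by (simp add: bnd_def)
  have bnde: "bnd m M (ev r0 c)" if "\<bar>c\<bar> \<le> 1" for r0 c using M1 that by (auto simp: bnd_def ev_def)
  from b show "u = w \<or> union_adj A k u w"
  proof (cases rule: inB_cases)
    case 1 thus ?thesis using act_zero_eq[OF assms(1,2) _ act] by auto
  next
    case (2 r0)
    have act': "Act a m k u (ev r0 1) w" using act 2
      by (simp add: Act_def Pp_cong[of m b "ev r0 1"] Pm_cong[of m b "ev r0 1"])
    have h: "[snd w = a r0 * snd u] (mod ?p)"
      using act' unfolding Act_def Pp_ev1[OF 2(1)] Pm_ev1[OF 2(1)] by (simp add: mult.commute)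
    have "u \<noteq> w"
    proof
      assume "u = w"
      hence "Act a m k u (\<lambda>r. 0) w" using act_zero[OF assms(1), of "\<lambda>r. 0"] by simp
      from act_locinj[OF assms(1) act' this bnde bnd0] 2(1) show False by (auto simp: ev_def)
    qed
    hence "snd u \<noteq> snd w" using f by (simp add: prod_eq_iff)
    moreover have "a r0 \<in> A" using A_def 2(1) by auto
    ultimately have "union_adj A k u w" using h f assms
      by (auto simp: union_adj_def G_adj_def V_iff)
    thus ?thesis by blast
  next
    case (3 r0)
    have act': "Act a m k u (ev r0 (-1)) w" using act 3
      by (simp add: Act_def Pp_cong[of m b "ev r0 (-1)"] Pm_cong[of m b "ev r0 (-1)"])
    have h: "[snd u = a r0 * snd w] (mod ?p)"
      using act' unfolding Act_def Pp_evm1[OF 3(1)] Pm_evm1[OF 3(1)] by (simp add: mult.commute cong_sym_eq)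
    have "u \<noteq> w"
    proof
      assume "u = w"
      hence "Act a m k u (\<lambda>r. 0) w" using act_zero[OF assms(1), of "\<lambda>r. 0"] by simp
      from act_locinj[OF assms(1) act' this bnde bnd0] 3(1) show False by (auto simp: ev_def)
    qed
    hence "snd u \<noteq> snd w" using f by (simp add: prod_eq_iff)
    moreover have "a r0 \<in> A" using A_def 3(1) by auto
    ultimately have "union_adj A k u w" using h f assms
      by (auto simp: union_adj_def G_adj_def V_iff)
    thus ?thesis by blast
  qed
qed

end



definition Pairs :: "nat \<Rightarrow> (nat \<times> nat) set" where "Pairs n = {(i,j). i < j \<and> j < n}"
definition RelF :: "(nat \<times> nat) set \<Rightarrow> (nat \<times> nat) set" where "RelF F = F \<union> F\<inverse>"
definition rho :: "(nat \<times> nat) set \<Rightarrow> nat \<Rightarrow> nat" where "rho F i = (LEAST j. (j, i) \<in> (RelF F)\<^sup>*)"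
definition Roots :: "nat \<Rightarrow> (nat \<times> nat) set \<Rightarrow> nat set" where "Roots n F = {i. i < n \<and> rho F i = i}"
definition Wset :: "nat \<Rightarrow> nat \<Rightarrow> (nat \<times> nat) set \<Rightarrow> (nat \<Rightarrow> nat \<Rightarrow> int) set" where
  "Wset m n F = {w \<in> {..<n} \<rightarrow>\<^sub>E ({..<m} \<rightarrow>\<^sub>E {- int (n*n)..int (n*n)}).
     (\<forall>i<n. rho F i = i \<longrightarrow> (\<forall>r<m. w i r = 0)) \<and> (\<forall>(i,j)\<in>F. inB m (\<lambda>r. w j r - w i r))}"

lemma finite_Pairs: "finite (Pairs n)"
  by (rule finite_subset[of _ "{..<n} \<times> {..<n}"]) (auto simp: Pairs_def)

lemma finite_Wset: "finite (Wset m n F)"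
proof -
  have "finite ({..<n} \<rightarrow>\<^sub>E ({..<m} \<rightarrow>\<^sub>E {- int (n*n)..int (n*n)}))"
    by (intro finite_PiE) auto
  thus ?thesis unfolding Wset_def by (rule finite_subset[rotated]) auto
qed

lemma rho_rel: "(rho F i, i) \<in> (RelF F)\<^sup>*"
  unfolding rho_def by (rule LeastI[of _ i]) simp

lemma rho_le: "rho F i \<le> i"
  unfolding rho_def by (rule Least_le) simp

lemma sym_RelF: "sym ((RelF F)\<^sup>*)"
  by (rule sym_rtrancl) (auto simp: RelF_def sym_def)

lemma rho_eq: assumes "(i, j) \<in> (RelF F)\<^sup>*" shows "rho F i = rho F j"
proof -
  have "\<And>z. (z, i) \<in> (RelF F)\<^sup>* \<longleftrightarrow> (z, j) \<in> (RelF F)\<^sup>*"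
    using assms sym_RelF by (meson rtrancl_trans symD)
  thus ?thesis unfolding rho_def by simp
qed

lemma rho_rho: "rho F (rho F i) = rho F i"
  using rho_eq[OF rho_rel] by simp

lemma rho_edge: "(i, j) \<in> F \<Longrightarrow> rho F i = rho F j"
  by (rule rho_eq) (auto simp: RelF_def)

lemma rho_Roots: "i < n \<Longrightarrow> rho F i \<in> Roots n F"
  using rho_le[of F i] rho_rho[of F i] by (auto simp: Roots_def)

lemma Roots_sub: "Roots n F \<subseteq> {..<n}" by (auto simp: Roots_def)

lemma RelF_sub: "F \<subseteq> Pairs n \<Longrightarrow> RelF F \<subseteq> {..<n} \<times> {..<n}"
  by (auto simp: RelF_def Pairs_def)

lemma short_path:
  assumes "F \<subseteq> Pairs n" "(i, j) \<in> (RelF F)\<^sup>*"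
  shows "\<exists>l\<le>n*n. (i, j) \<in> (RelF F)^^l"
proof -
  have sub: "RelF F \<subseteq> {..<n} \<times> {..<n}" using RelF_sub[OF assms(1)] .
  hence fin: "finite (RelF F)" by (rule finite_subset) auto
  have "card (RelF F) \<le> card ({..<n} \<times> {..<n})" by (rule card_mono[OF _ sub]) auto
  hence c: "card (RelF F) \<le> n * n" by (simp add: card_cartesian_product)
  from assms(2) obtain l where "l \<le> card (RelF F)" "(i, j) \<in> (RelF F)^^l"
    using rtrancl_finite_eq_relpow[OF fin] by auto
  thus ?thesis using c by (intro exI[of _ l]) auto
qed




lemma inB_cong: "inB m b \<Longrightarrow> (\<And>r. r < m \<Longrightarrow> b r = b' r) \<Longrightarrow> inB m b'"
  unfolding inB_def by metis

lemma inB_bnd: "inB m b \<Longrightarrow> bnd m 1 b"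
  unfolding inB_def bnd_def by auto

lemma bnd_add: "bnd m l v \<Longrightarrow> bnd m l' b \<Longrightarrow> bnd m (l + l') (\<lambda>r. v r + b r)"
  unfolding bnd_def
proof (intro allI impI)
  fix r assume "\<forall>r<m. \<bar>v r\<bar> \<le> int l" "\<forall>r<m. \<bar>b r\<bar> \<le> int l'" "r < m"
  hence "\<bar>v r\<bar> \<le> int l" "\<bar>b r\<bar> \<le> int l'" by auto
  thus "\<bar>v r + b r\<bar> \<le> int (l + l')" by linarith
qed

lemma bnd_neg: "bnd m l v \<Longrightarrow> bnd m l (\<lambda>r. - v r)"
  unfolding bnd_def by auto

lemma bnd_mono: "bnd m l v \<Longrightarrow> l \<le> l' \<Longrightarrow> bnd m l' v"
  unfolding bnd_def by force

context gsetup begin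

definition act :: "nat \<times> nat \<Rightarrow> (nat \<Rightarrow> int) \<Rightarrow> nat \<times> nat" where
  "act u v = (SOME y. y \<in> V \<and> Act a m k u v y)"

lemma act_prop: "u \<in> V \<Longrightarrow> act u v \<in> V \<and> Act a m k u v (act u v)"
  unfolding act_def using act_exists[of u v] by (metis (mono_tags, lifting) someI_ex)

lemma act_eqI: "u \<in> V \<Longrightarrow> y \<in> V \<Longrightarrow> Act a m k u v y \<Longrightarrow> act u v = y"
  using act_prop act_unique by blast

definition XF :: "nat \<Rightarrow> (nat \<times> nat) set \<Rightarrow> (nat \<Rightarrow> nat \<times> nat) set" where
  "XF n F = {x \<in> {..<n} \<rightarrow>\<^sub>E V. \<forall>(i,j)\<in>F. x i = x j \<or> union_adj A k (x i) (x j)}"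

lemma path_vec:
  assumes F: "F \<subseteq> Pairs n" and x: "x \<in> {..<n} \<rightarrow>\<^sub>E V"
    and edges: "\<forall>(i,j)\<in>F. \<exists>b. inB m b \<and> Act a m k (x i) b (x j)"
    and i: "i < n"
  shows "(i, j) \<in> (RelF F)^^l \<Longrightarrow> \<exists>v. bnd m l v \<and> Act a m k (x i) v (x j)"
proof (induction l arbitrary: j)
  case 0
  hence "j = i" by simp
  have "x i \<in> V" using x i by auto
  thus ?case using \<open>j = i\<close> act_zero[of "x i" "\<lambda>r. 0"]
    by (intro exI[of _ "\<lambda>r. 0"]) (auto simp: bnd_def)
next
  case (Suc l)
  from Suc.prems obtain z where z1: "(i, z) \<in> (RelF F)^^l" and z2: "(z, j) \<in> RelF F"
    by (auto elim: relpow_Suc_E)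
  from Suc.IH[OF z1] obtain v where v: "bnd m l v" "Act a m k (x i) v (x z)" by blast
  have xi: "x i \<in> V" using x i by auto
  have nz: "z < n" "j < n" using z2 F by (auto simp: RelF_def Pairs_def)
  from z2 have "\<exists>b. bnd m 1 b \<and> Act a m k (x z) b (x j)"
  proof (unfold RelF_def, elim UnE)
    assume "(z, j) \<in> F"
    thus ?thesis using edges inB_bnd by fast
  next
    assume "(z, j) \<in> F\<inverse>"
    hence "(j, z) \<in> F" by simp
    then obtain b where "inB m b" "Act a m k (x j) b (x z)" using edges by fast
    thus ?thesis using inB_bnd bnd_neg act_inv by blast
  qed
  then obtain b where b: "bnd m 1 b" "Act a m k (x z) b (x j)" by blast
  show ?case using act_comp[OF xi v(2) b(2)] bnd_add[OF v(1) b(1)] by auto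
qed

lemma bij_XF:
  assumes F: "F \<subseteq> Pairs n" and M: "n * n + 1 \<le> M"
  shows "bij_betw (\<lambda>(y, w). \<lambda>i\<in>{..<n}. act (y (rho F i)) (w i))
           ((Roots n F \<rightarrow>\<^sub>E V) \<times> Wset m n F) (XF n F)"
proof -
  let ?\<Phi> = "\<lambda>(y, w). \<lambda>i\<in>{..<n}. act (y (rho F i)) (w i)"
  let ?D = "(Roots n F \<rightarrow>\<^sub>E V) \<times> Wset m n F"
  have bndW: "bnd m (n*n) (w i)" if "w \<in> Wset m n F" "i < n" for w i
    using that unfolding Wset_def bnd_def by (force simp: PiE_iff)
  have rhoV: "y (rho F i) \<in> V" if "y \<in> Roots n F \<rightarrow>\<^sub>E V" "i < n" for y i
    using that rho_Roots[OF that(2), of F] by auto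
  have actW: "Act a m k (y (rho F i)) (w i) (?\<Phi> (y, w) i) \<and> ?\<Phi> (y, w) i \<in> V"
    if "y \<in> Roots n F \<rightarrow>\<^sub>E V" "i < n" for y w i
    using act_prop[OF rhoV[OF that]] that by simp
  have Fn: "i < n" "j < n" if "(i, j) \<in> F" for i j using that F by (auto simp: Pairs_def)
  have M1: "M \<ge> 1" using M by simp
  have bM: "bnd m M v" if "bnd m (n*n+1) v" for v using bnd_mono[OF that M] .
  show ?thesis
  proof (rule bij_betw_imageI)
    show "inj_on ?\<Phi> ?D"
    proof (rule inj_onI)
      fix p q assume pD: "p \<in> ?D" and qD: "q \<in> ?D" and pq: "?\<Phi> p = ?\<Phi> q"
      obtain y w y' w' where pp: "p = (y, w)" and qq: "q = (y', w')" by (cases p, cases q) auto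
      have y: "y \<in> Roots n F \<rightarrow>\<^sub>E V" and w: "w \<in> Wset m n F"
        and y': "y' \<in> Roots n F \<rightarrow>\<^sub>E V" and w': "w' \<in> Wset m n F"
        using pD qD pp qq by auto
      have eq: "?\<Phi> (y, w) = ?\<Phi> (y', w')" using pq pp qq by simp
      have root: "?\<Phi> (y, w) r = y r" if "r \<in> Roots n F" "y \<in> Roots n F \<rightarrow>\<^sub>E V" "w \<in> Wset m n F" for r y w
      proof -
        have r: "r < n" "rho F r = r" using that(1) by (auto simp: Roots_def)
        have "\<forall>q<m. w r q = 0" using that(3) r unfolding Wset_def by auto
        moreover have "y r \<in> V" using that by auto
        ultimately have "Act a m k (y r) (w r) (y r)" using act_zero by blast
        moreover have "Act a m k (y r) (w r) (?\<Phi> (y, w) r)" "?\<Phi> (y, w) r \<in> V"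
          using actW[OF that(2) r(1), of w] r by auto
        ultimately show ?thesis using act_unique \<open>y r \<in> V\<close> by blast
      qed
      have yy: "y = y'"
      proof (rule PiE_ext[OF y y'])
        fix r assume rR: "r \<in> Roots n F"
        have "?\<Phi> (y, w) r = ?\<Phi> (y', w') r" using eq by (rule fun_cong)
        from trans[OF trans[OF sym[OF root[OF rR y w]] this] root[OF rR y' w']] show "y r = y' r" .
      qed
      have ww: "w = w'"
      proof (rule PiE_ext)
        show "w \<in> {..<n} \<rightarrow>\<^sub>E ({..<m} \<rightarrow>\<^sub>E {- int (n*n)..int (n*n)})" using w by (simp add: Wset_def)
        show "w' \<in> {..<n} \<rightarrow>\<^sub>E ({..<m} \<rightarrow>\<^sub>E {- int (n*n)..int (n*n)})" using w' by (simp add: Wset_def)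
        fix i assume "i \<in> {..<n}"
        hence i: "i < n" by simp
        have a1: "Act a m k (y (rho F i)) (w i) (?\<Phi> (y, w) i)" using actW[OF y i] by simp
        have a2: "Act a m k (y (rho F i)) (w' i) (?\<Phi> (y, w) i)" using actW[OF y' i, of w'] eq yy by simp
        have "bnd m M (w i)" "bnd m M (w' i)"
          using bM bnd_mono[OF bndW[OF w i]] bnd_mono[OF bndW[OF w' i]] by simp_all
        hence "\<forall>r<m. w i r = w' i r" using act_locinj[OF rhoV[OF y i] a1 a2] by blast
        moreover have "w i \<in> {..<m} \<rightarrow>\<^sub>E {- int (n*n)..int (n*n)}" "w' i \<in> {..<m} \<rightarrow>\<^sub>E {- int (n*n)..int (n*n)}"
          using w w' i by (auto simp: Wset_def)
        ultimately show "w i = w' i" by (intro PiE_ext) auto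
      qed
      show "p = q" using yy ww pp qq by simp
    qed
  next
    show "?\<Phi> ` ?D = XF n F"
    proof (intro equalityI subsetI)
      fix x assume "x \<in> ?\<Phi> ` ?D"
      then obtain y w where y: "y \<in> Roots n F \<rightarrow>\<^sub>E V" and w: "w \<in> Wset m n F" and x: "x = ?\<Phi> (y, w)"
        by auto
      have xV: "x \<in> {..<n} \<rightarrow>\<^sub>E V" using actW[OF y] x by auto
      have "x i = x j \<or> union_adj A k (x i) (x j)" if ij: "(i, j) \<in> F" for i j
      proof -
        have i: "i < n" and j: "j < n" using Fn[OF ij] by auto
        have rr: "rho F i = rho F j" using rho_edge[OF ij] .
        have a1: "Act a m k (y (rho F i)) (w i) (x i)" using actW[OF y i] x by simp
        have a2: "Act a m k (y (rho F i)) (w j) (x j)" using actW[OF y j] x rr by simp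
        have xi: "x i \<in> V" using xV i by auto
        have xj: "x j \<in> V" using xV j by auto
        have a3: "Act a m k (x i) (\<lambda>r. - w i r + w j r) (x j)"
          using act_comp[OF xi act_inv[OF a1] a2] .
        have "inB m (\<lambda>r. w j r - w i r)" using w ij unfolding Wset_def by auto
        hence "inB m (\<lambda>r. - w i r + w j r)" by (rule inB_cong) simp
        thus ?thesis using R_iff[OF xi xj M1] a3 by blast
      qed
      thus "x \<in> XF n F" using xV unfolding XF_def by auto
    next
      fix x assume x: "x \<in> XF n F"
      have xV: "x \<in> {..<n} \<rightarrow>\<^sub>E V" using x by (simp add: XF_def)
      have edges: "\<forall>(i,j)\<in>F. \<exists>b. inB m b \<and> Act a m k (x i) b (x j)"
      proof (clarify)
        fix i j assume ij: "(i, j) \<in> F"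
        have "x i \<in> V" "x j \<in> V" using xV Fn[OF ij] by auto
        moreover have "x i = x j \<or> union_adj A k (x i) (x j)" using x ij by (auto simp: XF_def)
        ultimately show "\<exists>b. inB m b \<and> Act a m k (x i) b (x j)" using R_iff M1 by blast
      qed
      have "\<forall>i\<in>{..<n}. \<exists>v. bnd m (n*n) v \<and> Act a m k (x (rho F i)) v (x i)"
      proof
        fix i assume "i \<in> {..<n}"
        hence i: "i < n" by simp
        have ri: "rho F i < n" using rho_le[of F i] i by simp
        obtain l where l: "l \<le> n*n" "(rho F i, i) \<in> (RelF F)^^l"
          using short_path[OF F rho_rel] by blast
        from path_vec[OF F xV edges ri l(2)] obtain v where "bnd m l v" "Act a m k (x (rho F i)) v (x i)"
          by blast
        thus "\<exists>v. bnd m (n*n) v \<and> Act a m k (x (rho F i)) v (x i)" using bnd_mono l(1) by blast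
      qed
      from bchoice[OF this] obtain vf where vf0: "\<forall>i\<in>{..<n}. bnd m (n*n) (vf i) \<and> Act a m k (x (rho F i)) (vf i) (x i)"
        by blast
      have vf: "bnd m (n*n) (vf i) \<and> Act a m k (x (rho F i)) (vf i) (x i)" if "i \<in> {..<n}" for i
        using vf0 that by blast
      define w where "w = (\<lambda>i\<in>{..<n}. \<lambda>r\<in>{..<m}. vf i r)"
      define y where "y = (\<lambda>i\<in>Roots n F. x i)"
      have wi: "\<forall>r<m. w i r = vf i r" if "i < n" for i using that by (simp add: w_def)
      have actw: "Act a m k (x (rho F i)) (w i) (x i)" if "i < n" for i
      proof -
        have "Act a m k (x (rho F i)) (vf i) (x i)" using vf that by auto
        thus ?thesis unfolding Act_def using Pp_cong[OF wi[OF that, rule_format]] Pm_cong[OF wi[OF that, rule_format]]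
          by simp
      qed
      have bw: "bnd m (n*n) (w i)" if "i < n" for i using vf[of i] wi[OF that] that by (simp add: bnd_def)
      have xn: "x i \<in> V" if "i < n" for i using xV that by auto
      have yD: "y \<in> Roots n F \<rightarrow>\<^sub>E V" unfolding y_def using xV Roots_sub by auto
      have wD: "w \<in> Wset m n F"
        unfolding Wset_def
      proof (intro CollectI conjI allI impI ballI)
        show "w \<in> {..<n} \<rightarrow>\<^sub>E ({..<m} \<rightarrow>\<^sub>E {- int (n*n)..int (n*n)})"
          using vf unfolding w_def bnd_def by (force simp: PiE_iff)
      next
        fix i r assume i: "i < n" and root: "rho F i = i" and r: "r < m"
        have "Act a m k (x i) (w i) (x i)" using actw[OF i] root by simp
        moreover have "Act a m k (x i) (\<lambda>r. 0) (x i)" by (rule act_zero[OF xn[OF i]]) simp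
        moreover have "bnd m M (w i)" using bM bnd_mono[OF bw[OF i]] by simp
        moreover have "bnd m M (\<lambda>r. 0)" by (simp add: bnd_def)
        ultimately have "\<forall>r<m. w i r = 0" using act_locinj[OF xn[OF i]] by blast
        thus "w i r = 0" using r by simp
      next
        fix p assume "p \<in> F"
        then obtain i j where p: "p = (i, j)" and ij: "(i, j) \<in> F" by (cases p) auto
        have i: "i < n" and j: "j < n" using Fn[OF ij] by auto
        have rr: "rho F i = rho F j" using rho_edge[OF ij] .
        obtain b where b: "inB m b" "Act a m k (x i) b (x j)" using edges ij by blast
        have "rho F i < n" using rho_le[of F i] i by linarith
        hence rV: "x (rho F i) \<in> V" by (rule xn)
        have c1: "Act a m k (x (rho F i)) (\<lambda>r. w i r + b r) (x j)" using act_comp[OF rV actw[OF i] b(2)] .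
        have c2: "Act a m k (x (rho F i)) (w j) (x j)" using actw[OF j] rr by simp
        have b1: "bnd m M (\<lambda>r. w i r + b r)" using bM bnd_add[OF bw[OF i] inB_bnd[OF b(1)]] by blast
        have b2: "bnd m M (w j)" using bM bnd_mono[OF bw[OF j]] by simp
        have e: "\<forall>r<m. w i r + b r = w j r" using act_locinj[OF rV c1 c2 b1 b2] .
        have "inB m (\<lambda>r. w j r - w i r)"
        proof (rule inB_cong[OF b(1)])
          fix r assume "r < m" thus "b r = w j r - w i r" using e by force
        qed
        thus "case p of (i, j) \<Rightarrow> inB m (\<lambda>r. w j r - w i r)" using p by simp
      qed
      have "?\<Phi> (y, w) = x"
      proof (rule PiE_ext[OF _ xV])
        show "?\<Phi> (y, w) \<in> {..<n} \<rightarrow>\<^sub>E V" using actW[OF yD] by auto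
        fix i assume "i \<in> {..<n}"
        hence i: "i < n" by simp
        have "y (rho F i) = x (rho F i)" using rho_Roots[OF i] by (simp add: y_def)
        moreover have "act (x (rho F i)) (w i) = x i"
          using act_eqI[OF _ xn[OF i] actw[OF i]] xn rho_le[of F i] i by simp
        ultimately show "?\<Phi> (y, w) i = x i" using i by simp
      qed
      thus "x \<in> ?\<Phi> ` ?D" using yD wD by force
    qed
  qed
qed

end



lemma card_bij_tuples:
  assumes "finite S" "card S = n"
  shows "card {x \<in> {..<n} \<rightarrow>\<^sub>E S. bij_betw x {..<n} S} = fact n"
proof -
  let ?f = "\<lambda>xs. \<lambda>i\<in>{..<n}. xs ! i"
  have "bij_betw ?f (permutations_of_set S) {x \<in> {..<n} \<rightarrow>\<^sub>E S. bij_betw x {..<n} S}"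
  proof (rule bij_betw_imageI)
    show "inj_on ?f (permutations_of_set S)"
    proof (rule inj_onI)
      fix xs ys assume xs: "xs \<in> permutations_of_set S" and ys: "ys \<in> permutations_of_set S"
        and eq: "?f xs = ?f ys"
      have lx: "length xs = n" "length ys = n"
        using xs ys assms distinct_card by (fastforce simp: permutations_of_set_def)+
      show "xs = ys"
      proof (rule nth_equalityI)
        show "length xs = length ys" using lx by simp
        fix i assume "i < length xs"
        thus "xs ! i = ys ! i" using fun_cong[OF eq, of i] lx by simp
      qed
    qed
  next
    show "?f ` permutations_of_set S = {x \<in> {..<n} \<rightarrow>\<^sub>E S. bij_betw x {..<n} S}"
    proof (intro equalityI subsetI)
      fix x assume "x \<in> ?f ` permutations_of_set S"
      then obtain xs where xs: "xs \<in> permutations_of_set S" and x: "x = ?f xs" by blast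
      have d: "distinct xs" and st: "set xs = S" using xs by (auto simp: permutations_of_set_def)
      have lx: "length xs = n" using d st assms distinct_card by fastforce
      have "bij_betw ((!) xs) {..<n} S"
        unfolding bij_betw_def using d st lx
        by (auto simp: inj_on_def nth_eq_iff_index_eq set_conv_nth)
      hence "bij_betw x {..<n} S" unfolding x by (rule bij_betw_cong[THEN iffD1, rotated]) simp
      moreover have "x \<in> {..<n} \<rightarrow>\<^sub>E S" unfolding x using st lx by auto
      ultimately show "x \<in> {x \<in> {..<n} \<rightarrow>\<^sub>E S. bij_betw x {..<n} S}" by simp
    next
      fix x assume "x \<in> {x \<in> {..<n} \<rightarrow>\<^sub>E S. bij_betw x {..<n} S}"
      hence x: "x \<in> {..<n} \<rightarrow>\<^sub>E S" and b: "bij_betw x {..<n} S" by auto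
      let ?xs = "map x [0..<n]"
      have "distinct ?xs" using b by (simp add: distinct_map bij_betw_def atLeast0LessThan)
      moreover have "set ?xs = S" using b by (simp add: bij_betw_def atLeast0LessThan)
      ultimately have "?xs \<in> permutations_of_set S" by (simp add: permutations_of_set_def)
      moreover have "?f ?xs = x"
        using x by (intro ext) (auto simp: PiE_def extensional_def)
      ultimately show "x \<in> ?f ` permutations_of_set S" by (metis image_eqI)
    qed
  qed
  hence "card {x \<in> {..<n} \<rightarrow>\<^sub>E S. bij_betw x {..<n} S} = card (permutations_of_set S)"
    by (simp add: bij_betw_same_card)
  thus ?thesis using assms by simp
qed

lemma card_inj_tuples:
  assumes V: "finite V"
  shows "card {x \<in> {..<n} \<rightarrow>\<^sub>E V. inj_on x {..<n} \<and> Q (x ` {..<n})}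
       = fact n * card {S. S \<subseteq> V \<and> card S = n \<and> Q S}"
proof -
  let ?Fam = "{S. S \<subseteq> V \<and> card S = n \<and> Q S}"
  let ?B = "\<lambda>S. {x \<in> {..<n} \<rightarrow>\<^sub>E S. bij_betw x {..<n} S}"
  have eq: "{x \<in> {..<n} \<rightarrow>\<^sub>E V. inj_on x {..<n} \<and> Q (x ` {..<n})} = (\<Union>S\<in>?Fam. ?B S)"
  proof (intro equalityI subsetI)
    fix x assume "x \<in> {x \<in> {..<n} \<rightarrow>\<^sub>E V. inj_on x {..<n} \<and> Q (x ` {..<n})}"
    hence x: "x \<in> {..<n} \<rightarrow>\<^sub>E V" "inj_on x {..<n}" "Q (x ` {..<n})" by auto
    have "x ` {..<n} \<in> ?Fam" using x by (auto simp: card_image)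
    moreover have "x \<in> ?B (x ` {..<n})" using x by (auto simp: bij_betw_def)
    ultimately show "x \<in> (\<Union>S\<in>?Fam. ?B S)" by blast
  next
    fix x assume "x \<in> (\<Union>S\<in>?Fam. ?B S)"
    then obtain S where S: "S \<in> ?Fam" and x: "x \<in> ?B S" by blast
    have "x ` {..<n} = S" using x by (auto simp: bij_betw_def)
    thus "x \<in> {x \<in> {..<n} \<rightarrow>\<^sub>E V. inj_on x {..<n} \<and> Q (x ` {..<n})}"
      using S x by (auto simp: bij_betw_def PiE_def Pi_def)
  qed
  have finFam: "finite ?Fam" by (rule finite_subset[of _ "Pow V"]) (use V in auto)
  have finB: "\<forall>S\<in>?Fam. finite (?B S)"
  proof
    fix S assume "S \<in> ?Fam"
    hence "finite S" using V finite_subset by blast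
    thus "finite (?B S)" by (intro finite_subset[OF _ finite_PiE[of "{..<n}" "\<lambda>_. S"]]) auto
  qed
  have disj: "\<forall>S\<in>?Fam. \<forall>T\<in>?Fam. S \<noteq> T \<longrightarrow> ?B S \<inter> ?B T = {}"
    by (auto simp: bij_betw_def)
  have "card (\<Union>S\<in>?Fam. ?B S) = (\<Sum>S\<in>?Fam. card (?B S))"
    by (rule card_UN_disjoint[OF finFam finB disj])
  also have "\<dots> = (\<Sum>S\<in>?Fam. fact n)"
  proof (rule sum.cong[OF refl])
    fix S assume "S \<in> ?Fam"
    hence "finite S" "card S = n" using V finite_subset by auto
    thus "card (?B S) = fact n" by (rule card_bij_tuples)
  qed
  finally show ?thesis using eq by (simp add: mult.commute)
qed




lemma prod_indicator: "finite F \<Longrightarrow> (\<Prod>p\<in>F. if P p then 1 else 0) = (if \<forall>p\<in>F. P p then 1 else (0::int))"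
  by (induction F rule: finite_induct) auto

lemma sum_indicator: "finite X \<Longrightarrow> (\<Sum>x\<in>X. if P x then 1 else 0) = int (card {x\<in>X. P x})"
  by (simp add: sum.If_cases Int_def conj_commute)

lemma incl_excl:
  assumes X: "finite X" and P: "finite P"
  shows "int (card {x\<in>X. \<forall>p\<in>P. \<not> R x p}) = (\<Sum>F\<in>Pow P. (-1) ^ card F * int (card {x\<in>X. \<forall>p\<in>F. R x p}))"
proof -
  let ?g = "\<lambda>x p. if R x p then 1 else (0::int)"
  have "int (card {x\<in>X. \<forall>p\<in>P. \<not> R x p}) = (\<Sum>x\<in>X. if \<forall>p\<in>P. \<not> R x p then 1 else 0)"
    using sum_indicator[OF X] by simp
  also have "\<dots> = (\<Sum>x\<in>X. \<Prod>p\<in>P. (- ?g x p) + 1)"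
  proof (rule sum.cong[OF refl])
    fix x
    have "(\<Prod>p\<in>P. (- ?g x p) + 1) = (\<Prod>p\<in>P. if \<not> R x p then 1 else 0)"
      by (rule prod.cong) auto
    thus "(if \<forall>p\<in>P. \<not> R x p then 1 else 0) = (\<Prod>p\<in>P. (- ?g x p) + 1)"
      using prod_indicator[OF P, of "\<lambda>p. \<not> R x p"] by simp
  qed
  also have "\<dots> = (\<Sum>x\<in>X. \<Sum>F\<in>Pow P. (\<Prod>p\<in>F. - ?g x p) * (\<Prod>p\<in>P - F. 1))"
    by (rule sum.cong[OF refl]) (rule prod_add[OF P])
  also have "\<dots> = (\<Sum>x\<in>X. \<Sum>F\<in>Pow P. (-1) ^ card F * (if \<forall>p\<in>F. R x p then 1 else 0))"
  proof (intro sum.cong refl)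
    fix x F assume "F \<in> Pow P"
    hence fF: "finite F" using P finite_subset by auto
    have "(\<Prod>p\<in>F. - ?g x p) = (\<Prod>p\<in>F. (-1) * ?g x p)" by simp
    also have "\<dots> = (-1) ^ card F * (\<Prod>p\<in>F. ?g x p)" by (simp only: prod.distrib prod_constant)
    finally show "(\<Prod>p\<in>F. - ?g x p) * (\<Prod>p\<in>P - F. 1) = (-1) ^ card F * (if \<forall>p\<in>F. R x p then 1 else 0)"
      using prod_indicator[OF fF, of "R x"] by simp
  qed
  also have "\<dots> = (\<Sum>F\<in>Pow P. \<Sum>x\<in>X. (-1) ^ card F * (if \<forall>p\<in>F. R x p then 1 else 0))"
    by (rule sum.swap)
  also have "\<dots> = (\<Sum>F\<in>Pow P. (-1) ^ card F * int (card {x\<in>X. \<forall>p\<in>F. R x p}))"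
    by (intro sum.cong refl) (simp add: sum_distrib_left[symmetric] sum_indicator[OF X])
  finally show ?thesis .
qed

context gsetup begin

lemma finite_V: "finite V"
proof -
  have "V \<subseteq> {..<s} \<times> {..Max (k ` {..<s})}"
    by (auto simp: union_verts_def intro: order.trans[OF _ Max_ge])
  thus ?thesis by (rule finite_subset) auto
qed

lemma card_V: "card V = (\<Sum>t<s. k t)"
proof -
  have "V = Sigma {..<s} (\<lambda>t. {1..k t})" by (auto simp: union_verts_def)
  thus ?thesis by simp
qed

lemma card_XF: assumes "F \<subseteq> Pairs n" "n * n + 1 \<le> M"
  shows "card (XF n F) = card V ^ card (Roots n F) * card (Wset m n F)"
proof -
  have "card (XF n F) = card ((Roots n F \<rightarrow>\<^sub>E V) \<times> Wset m n F)"
    using bij_betw_same_card[OF bij_XF[OF assms]] by simp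
  also have "\<dots> = card (Roots n F \<rightarrow>\<^sub>E V) * card (Wset m n F)" by (rule card_cartesian_product)
  also have "card (Roots n F \<rightarrow>\<^sub>E V) = card V ^ card (Roots n F)"
    using finite_subset[OF Roots_sub] by (simp add: card_PiE)
  finally show ?thesis .
qed

lemma ua_sym: "union_adj A k v w \<Longrightarrow> union_adj A k w v"
  by (auto simp: union_adj_def G_adj_def)

lemma ua_irrefl: "\<not> union_adj A k v v"
  by (auto simp: union_adj_def G_adj_def)

lemma main_count: assumes "n * n + 1 \<le> M"
  shows "int (fact n * num_indep_sets A k s n)
    = (\<Sum>F\<in>Pow (Pairs n). (-1) ^ card F * int (card V ^ card (Roots n F) * card (Wset m n F)))"
proof -
  let ?X = "{..<n} \<rightarrow>\<^sub>E V"
  let ?R = "\<lambda>x p. case p of (i, j) \<Rightarrow> x i = x j \<or> union_adj A k (x i) (x j)"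
  have "fact n * num_indep_sets A k s n
      = card {x \<in> ?X. inj_on x {..<n} \<and> (\<lambda>S. \<forall>v\<in>S. \<forall>w\<in>S. \<not> union_adj A k v w) (x ` {..<n})}"
    unfolding num_indep_sets_def by (rule card_inj_tuples[OF finite_V, symmetric])
  also have "{x \<in> ?X. inj_on x {..<n} \<and> (\<lambda>S. \<forall>v\<in>S. \<forall>w\<in>S. \<not> union_adj A k v w) (x ` {..<n})}
      = {x \<in> ?X. \<forall>p\<in>Pairs n. \<not> ?R x p}"
  proof (intro Collect_cong conj_cong refl)
    fix x
    show "(inj_on x {..<n} \<and> (\<forall>v\<in>x ` {..<n}. \<forall>w\<in>x ` {..<n}. \<not> union_adj A k v w))
       = (\<forall>p\<in>Pairs n. \<not> ?R x p)"
    proof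
      assume "inj_on x {..<n} \<and> (\<forall>v\<in>x ` {..<n}. \<forall>w\<in>x ` {..<n}. \<not> union_adj A k v w)"
      thus "\<forall>p\<in>Pairs n. \<not> ?R x p" by (auto simp: Pairs_def inj_on_def)
    next
      assume h: "\<forall>p\<in>Pairs n. \<not> ?R x p"
      have h': "x i \<noteq> x j \<and> \<not> union_adj A k (x i) (x j)" if "i < n" "j < n" "i \<noteq> j" for i j
      proof (cases "i < j")
        case True thus ?thesis using h that by (auto simp: Pairs_def)
      next
        case False
        hence "j < i" using that by simp
        hence "(j, i) \<in> Pairs n" using that by (simp add: Pairs_def)
        hence "x j \<noteq> x i \<and> \<not> union_adj A k (x j) (x i)" using h by auto
        thus ?thesis using ua_sym by metis
      qed
      show "inj_on x {..<n} \<and> (\<forall>v\<in>x ` {..<n}. \<forall>w\<in>x ` {..<n}. \<not> union_adj A k v w)"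
      proof
        show "inj_on x {..<n}" unfolding inj_on_def using h' by blast
        show "\<forall>v\<in>x ` {..<n}. \<forall>w\<in>x ` {..<n}. \<not> union_adj A k v w"
        proof (intro ballI)
          fix v w assume "v \<in> x ` {..<n}" "w \<in> x ` {..<n}"
          then obtain i j where "i < n" "j < n" "v = x i" "w = x j" by blast
          thus "\<not> union_adj A k v w" using h'[of i j] ua_irrefl by (cases "i = j") auto
        qed
      qed
    qed
  qed
  finally have "int (fact n * num_indep_sets A k s n) = int (card {x \<in> ?X. \<forall>p\<in>Pairs n. \<not> ?R x p})"
    by simp
  also have "\<dots> = (\<Sum>F\<in>Pow (Pairs n). (-1) ^ card F * int (card {x\<in>?X. \<forall>p\<in>F. ?R x p}))"
  proof (rule incl_excl)
    show "finite ?X" using finite_V by (intro finite_PiE) auto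
  qed (rule finite_Pairs)
  also have "\<dots> = (\<Sum>F\<in>Pow (Pairs n). (-1) ^ card F * int (card V ^ card (Roots n F) * card (Wset m n F)))"
  proof (intro sum.cong refl)
    fix F assume "F \<in> Pow (Pairs n)"
    hence F: "F \<subseteq> Pairs n" by simp
    have "{x\<in>?X. \<forall>p\<in>F. ?R x p} = XF n F" unfolding XF_def by (simp add: case_prod_beta')
    thus "(-1) ^ card F * int (card {x\<in>?X. \<forall>p\<in>F. ?R x p}) =
          (-1) ^ card F * int (card V ^ card (Roots n F) * card (Wset m n F))"
      using card_XF[OF F assms] by simp
  qed
  finally show ?thesis .
qed

end



lemma powi_split: "(q::rat) powi w = q ^ nat w / q ^ nat (- w)"
  by (cases "w \<ge> 0") (auto simp: power_int_def power_inverse divide_inverse)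

lemma prod_powi_P:
  assumes "\<And>r. r < m \<Longrightarrow> a r > 0"
  shows "(\<Prod>r<m. (of_nat (a r) :: rat) powi (v r - u r))
       = (of_nat (Pp a m v) / of_nat (Pm a m v)) / (of_nat (Pp a m u) / of_nat (Pm a m u))"
proof -
  have "(\<Prod>r<m. (of_nat (a r) :: rat) powi (v r - u r)) = (\<Prod>r<m. (of_nat (a r) :: rat) powi v r / of_nat (a r) powi u r)"
    using assms by (intro prod.cong refl power_int_diff) auto
  also have "\<dots> = (\<Prod>r<m. (of_nat (a r) :: rat) powi v r) / (\<Prod>r<m. (of_nat (a r) :: rat) powi u r)"
    by (rule prod_dividef)
  also have "(\<Prod>r<m. (of_nat (a r) :: rat) powi v r) = of_nat (Pp a m v) / of_nat (Pm a m v)"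
    unfolding powi_split Pp_def Pm_def by (simp add: prod_dividef)
  also have "(\<Prod>r<m. (of_nat (a r) :: rat) powi u r) = of_nat (Pp a m u) / of_nat (Pm a m u)"
    unfolding powi_split Pp_def Pm_def by (simp add: prod_dividef)
  finally show ?thesis .
qed

lemma indep_eq:
  assumes A: "A = a ` {..<m}" and inj: "inj_on a {..<m}" and pos: "\<And>r. r < m \<Longrightarrow> a r > 0"
    and ind: "mult_indep A" and eq: "Pp a m v * Pm a m u = Pp a m u * Pm a m v"
  shows "\<forall>r<m. v r = u r"
proof -
  define e where "e x = v (the_inv_into {..<m} a x) - u (the_inv_into {..<m} a x)" for x
  have ea: "e (a r) = v r - u r" if "r < m" for r
    using the_inv_into_f_f[OF inj] that by (simp add: e_def)
  have "(\<Prod>x\<in>A. (of_nat x :: rat) powi e x) = (\<Prod>r<m. (of_nat (a r) :: rat) powi e (a r))"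
    unfolding A by (rule prod.reindex[OF inj, unfolded comp_def])
  also have "\<dots> = (\<Prod>r<m. (of_nat (a r) :: rat) powi (v r - u r))"
    by (intro prod.cong refl) (simp add: ea)
  also have "\<dots> = (of_nat (Pp a m v) / of_nat (Pm a m v)) / (of_nat (Pp a m u) / of_nat (Pm a m u))"
    by (rule prod_powi_P[OF pos])
  also have "\<dots> = 1"
  proof -
    have nz: "Pm a m v \<noteq> 0" "Pm a m u \<noteq> 0" "Pp a m u \<noteq> 0"
      using pos by (auto simp: Pp_def Pm_def)
    have "(of_nat (Pp a m v * Pm a m u) :: rat) = of_nat (Pp a m u * Pm a m v)" using eq by simp
    thus ?thesis using nz by (simp add: field_simps)
  qed
  finally have "\<forall>x\<in>A. e x = 0" using ind unfolding mult_indep_def by blast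
  thus ?thesis using ea A by auto
qed




theorem theorem3p1:
  fixes m n :: nat
  assumes "m \<ge> 1"
  shows "\<exists>P :: rat poly. \<forall>A :: nat set.
           finite A \<and> card A = m \<and> (\<forall>x\<in>A. x \<ge> 2) \<and> mult_indep A \<longrightarrow>
           (\<exists>N :: nat. \<forall>s \<ge> 1. \<forall>k :: nat \<Rightarrow> nat.
              (\<forall>t<s. k t > 0 \<and> prime (k t + 1) \<and> k t + 1 > N) \<longrightarrow>
              of_nat (num_indep_sets A k s n) = poly P (of_nat (\<Sum>t<s. k t)))"
proof -
  define c where "c F = (of_int ((-1) ^ card F * int (card (Wset m n F))) / of_nat (fact n) :: rat)" for F
  define P where "P = (\<Sum>F\<in>Pow (Pairs n). smult (c F) (monom 1 (card (Roots n F))))"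
  have polyP: "poly P x = (\<Sum>F\<in>Pow (Pairs n). c F * x ^ card (Roots n F))" for x
    unfolding P_def by (simp add: poly_sum poly_monom)
  show ?thesis
  proof (intro exI[of _ P] allI impI)
    fix A :: "nat set"
    assume "finite A \<and> card A = m \<and> (\<forall>x\<in>A. x \<ge> 2) \<and> mult_indep A"
    hence fA: "finite A" and cA: "card A = m" and ge2: "\<forall>x\<in>A. x \<ge> 2" and ind: "mult_indep A" by auto
    define as where "as = sorted_list_of_set A"
    define a where "a r = as ! r" for r
    define M where "M = n * n + 1"
    have las: "length as = m" and das: "distinct as" and sas: "set as = A"
      using fA cA by (auto simp: as_def)
    have Aa: "A = a ` {..<m}" unfolding a_def using sas las by (auto simp: set_conv_nth)
    have inj: "inj_on a {..<m}" unfolding a_def inj_on_def using das las by (simp add: nth_eq_iff_index_eq)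
    have a2: "a r \<ge> 2" if "r < m" for r using ge2 Aa that by auto
    define Box where "Box = {..<m} \<rightarrow>\<^sub>E {- int M..int M}"
    define D where "D = (\<lambda>(v, u). nat \<bar>int (Pp a m v * Pm a m u) - int (Pp a m u * Pm a m v)\<bar>) ` (Box \<times> Box)"
    define N where "N = Max (a ` {..<m} \<union> D)"
    have finBox: "finite Box" unfolding Box_def by (intro finite_PiE) auto
    have finS: "finite (a ` {..<m} \<union> D)" using finBox unfolding D_def by auto
    have aN: "a r \<le> N" if "r < m" for r unfolding N_def using finS that by (intro Max_ge) auto
    have DN: "d \<le> N" if "d \<in> D" for d unfolding N_def using finS that by (intro Max_ge) auto
    show "\<exists>N. \<forall>s\<ge>1. \<forall>k. (\<forall>t<s. 0 < k t \<and> prime (k t + 1) \<and> N < k t + 1) \<longrightarrow>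
            of_nat (num_indep_sets A k s n) = poly P (of_nat (\<Sum>t<s. k t))"
    proof (intro exI[of _ N] allI impI)
      fix s :: nat and k :: "nat \<Rightarrow> nat"
      assume "1 \<le> s" and kh: "\<forall>t<s. 0 < k t \<and> prime (k t + 1) \<and> N < k t + 1"
      interpret gsetup A a m k s M
      proof
        show "A = a ` {0..<m}" using Aa by (simp add: atLeast0LessThan)
        show "\<And>t. t < s \<Longrightarrow> prime (k t + 1)" using kh by blast
        show "\<not> (k t + 1) dvd a r" if "t < s" "r < m" for t r
        proof
          assume "(k t + 1) dvd a r"
          hence "k t + 1 \<le> a r" using a2[OF that(2)] by (intro dvd_imp_le) auto
          moreover have "N < k t + 1" using kh that(1) by blast
          ultimately show False using aN[OF that(2)] by linarith
        qed
        show "\<forall>r<m. v r = u r" if t: "t < s" and bv: "bnd m M v" and bu: "bnd m M u"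
          and cg: "[Pp a m v * Pm a m u = Pp a m u * Pm a m v] (mod (k t + 1))" for t v u
        proof -
          define v' where "v' = restrict v {..<m}"
          define u' where "u' = restrict u {..<m}"
          have v'B: "v' \<in> Box" and u'B: "u' \<in> Box"
            using bv bu unfolding Box_def v'_def u'_def bnd_def by (auto simp: abs_le_iff)
          have e1: "Pp a m v = Pp a m v'" "Pm a m v = Pm a m v'" "Pp a m u = Pp a m u'" "Pm a m u = Pm a m u'"
            by (auto intro!: Pp_cong Pm_cong simp: v'_def u'_def)
          define X where "X = Pp a m v * Pm a m u"
          define Y where "Y = Pp a m u * Pm a m v"
          define d where "d = nat \<bar>int X - int Y\<bar>"
          have "d \<in> D" unfolding D_def d_def X_def Y_def e1 using v'B u'B by force
          hence "d \<le> N" by (rule DN)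
          moreover have "N < k t + 1" using kh t by blast
          ultimately have dN: "d < k t + 1" by linarith
          have cg': "[X = Y] (mod (k t + 1))" using cg unfolding X_def Y_def .
          have "[int X = int Y] (mod int (k t + 1))" using cg' by (simp only: cong_int_iff)
          hence "int (k t + 1) dvd int X - int Y" by (simp add: cong_iff_dvd_diff)
          hence "int (k t + 1) dvd int d" unfolding d_def by simp
          hence "(k t + 1) dvd d" by (simp only: of_nat_dvd_iff)
          hence "d = 0" using dN by (metis dvd_imp_le not_less neq0_conv)
          hence "X = Y" unfolding d_def by simp
          thus ?thesis using indep_eq[OF Aa inj _ ind] a2 unfolding X_def Y_def by force
        qed
      qed
      have "int (fact n * num_indep_sets A k s n)
          = (\<Sum>F\<in>Pow (Pairs n). (-1) ^ card F * int (card V ^ card (Roots n F) * card (Wset m n F)))"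
        by (rule main_count) (simp add: M_def)
      hence "(of_int (int (fact n * num_indep_sets A k s n)) :: rat)
          = of_int (\<Sum>F\<in>Pow (Pairs n). (-1) ^ card F * int (card V ^ card (Roots n F) * card (Wset m n F)))"
        by simp
      hence "of_nat (fact n) * (of_nat (num_indep_sets A k s n) :: rat)
          = (\<Sum>F\<in>Pow (Pairs n). of_int ((-1) ^ card F * int (card (Wset m n F))) * of_nat (card V) ^ card (Roots n F))"
        by (simp add: ac_simps)
      also have "\<dots> = of_nat (fact n) * (\<Sum>F\<in>Pow (Pairs n). c F * of_nat (card V) ^ card (Roots n F))"
        by (simp add: c_def sum_distrib_left)
      finally have "(of_nat (num_indep_sets A k s n) :: rat) = (\<Sum>F\<in>Pow (Pairs n). c F * of_nat (card V) ^ card (Roots n F))"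
        by simp
      thus "of_nat (num_indep_sets A k s n) = poly P (of_nat (\<Sum>t<s. k t))"
        using card_V polyP by simp
    qed
  qed
qed



end
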